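(* Let $X$ be a Banach space and let $A$ be a separable closed convex bounded subset of $X$ having small combinations of slices. Then $A$ is an SCD set.
   Context: A slice of a convex bounded set $A$ is $S(A,x^*,\varepsilon)=\{x\in A:\ \mathrm{Re}\,x^*(x)>\sup\mathrm{Re}\,x^*(A)-\varepsilon\}$ ($x^*\in X^*$, $\varepsilon>0$). A convex combination of slices of $A$ is a set $\sum_{i=1}^m\lambda_iS_i$ with $\lambda_i>0$, $\sum\lambda_i=1$, $S_i$ slices of $A$. $A$ has small combinations of slices if every slice of $A$ contains convex combinations of slices of $A$ of arbitrarily small diameter. $A$ is an SCD set if there is a sequence $(S_n)$ of slices of $A$ such that $A\subseteq\overline{\mathrm{conv}}(B)$ for every $B\subseteq A$ intersecting every $S_n$. *)

theory Defs
  imports "HOL-Analysis.Analysis"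
begin

definition slice :: "'a::real_normed_vector set \<Rightarrow> ('a \<Rightarrow> real) \<Rightarrow> real \<Rightarrow> 'a set" where
  "slice A f eps = {x \<in> A. f x > Sup (f ` A) - eps}"

definition is_slice :: "'a::real_normed_vector set \<Rightarrow> 'a set \<Rightarrow> bool" where
  "is_slice A S \<longleftrightarrow> (\<exists>f eps. bounded_linear f \<and> eps > 0 \<and> S = slice A f eps)"

definition is_ccs :: "'a::real_normed_vector set \<Rightarrow> 'a set \<Rightarrow> bool" where
  "is_ccs A C \<longleftrightarrow> (\<exists>m::nat. \<exists>lam::nat \<Rightarrow> real. \<exists>S::nat \<Rightarrow> 'a set.
      m \<ge> 1 \<and> (\<forall>i<m. lam i > 0 \<and> is_slice A (S i)) \<and> (\<Sum>i<m. lam i) = 1 \<and>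
      C = {(\<Sum>i<m. lam i *\<^sub>R x i) | x. \<forall>i<m. x i \<in> S i})"

definition small_comb_slices :: "'a::real_normed_vector set \<Rightarrow> bool" where
  "small_comb_slices A \<longleftrightarrow>
     (\<forall>S. is_slice A S \<longrightarrow> (\<forall>e>0. \<exists>C. is_ccs A C \<and> C \<subseteq> S \<and> diameter C < e))"

definition SCD_set :: "'a::real_normed_vector set \<Rightarrow> bool" where
  "SCD_set A \<longleftrightarrow> (\<exists>Sn::nat \<Rightarrow> 'a set. (\<forall>n. is_slice A (Sn n)) \<and>
      (\<forall>B. B \<subseteq> A \<and> (\<forall>n. B \<inter> Sn n \<noteq> {}) \<longrightarrow> A \<subseteq> closure (convex hull B)))"

definition separable_set :: "'a::metric_space set \<Rightarrow> bool" where
  "separable_set A \<longleftrightarrow> (\<exists>D. countable D \<and> D \<subseteq> A \<and> A \<subseteq> closure D)"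

end

theory Submission
  imports Defs
begin

lemma hb_ext:
  fixes p :: "'a::real_vector \<Rightarrow> real"
  assumes sub: "\<And>x y. p (x+y) \<le> p x + p y"
    and hom: "\<And>t x. t > 0 \<Longrightarrow> p (t *\<^sub>R x) = t * p x"
  shows "\<exists>f. linear f \<and> (\<forall>x. f x \<le> p x) \<and> f z = p z"
proof -
  have p0: "p 0 = 0" using hom[of 2 0] by simp
  define G0 where "G0 = span {(z, p z)}"
  define AA where "AA = {G. subspace G \<and> G0 \<subseteq> G \<and> (\<forall>x a. (x,a)\<in>G \<longrightarrow> a \<le> p x)}"
  have G0AA: "G0 \<in> AA"
  proof -
    have "k * p z \<le> p (k *\<^sub>R z)" for k
    proof (cases "k > 0")
      case True then show ?thesis using hom by simp
    next
      case False
      have "p 0 \<le> p (k *\<^sub>R z) + p ((-k) *\<^sub>R z)"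
        using sub[of "k *\<^sub>R z" "(-k) *\<^sub>R z"] by (simp add: scaleR_left_distrib[symmetric])
      moreover have "p ((-k) *\<^sub>R z) = (-k) * p z" if "k < 0" using hom[of "-k" z] that by simp
      ultimately show ?thesis using False p0 by (cases "k = 0") auto
    qed
    moreover have "subspace G0" unfolding G0_def by (rule subspace_span)
    ultimately show ?thesis unfolding AA_def G0_def by (auto simp: span_singleton)
  qed
  have "\<exists>M\<in>AA. \<forall>X\<in>AA. M \<subseteq> X \<longrightarrow> X = M"
  proof (rule Zorn_Lemma2, intro ballI)
    fix C assume C: "C \<in> chains AA"
    show "\<exists>U\<in>AA. \<forall>X\<in>C. X \<subseteq> U"
    proof (cases "C = {}")
      case True then show ?thesis using G0AA by blast
    next
      case False
      have CA: "C \<subseteq> AA" using C by (rule chainsD2)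
      have ch: "X \<subseteq> Y \<or> Y \<subseteq> X" if "X \<in> C" "Y \<in> C" for X Y using chainsD[OF C that] .
      have "subspace (\<Union>C)"
        unfolding subspace_def
      proof (intro conjI ballI allI)
        obtain X where "X \<in> C" using False by blast
        then show "0 \<in> \<Union>C" using CA unfolding AA_def by (auto intro: subspace_0)
      next
        fix x y assume "x \<in> \<Union>C" "y \<in> \<Union>C"
        then obtain X Y where XY: "X \<in> C" "Y \<in> C" "x \<in> X" "y \<in> Y" by blast
        then consider "X \<subseteq> Y" | "Y \<subseteq> X" using ch by blast
        then show "x + y \<in> \<Union>C"
        proof cases
          case 1 then show ?thesis using XY CA unfolding AA_def by (auto intro: subspace_add)
        next
          case 2 then show ?thesis using XY CA unfolding AA_def by (auto intro: subspace_add)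
        qed
      next
        fix c x assume "x \<in> \<Union>C"
        then show "c *\<^sub>R x \<in> \<Union>C" using CA unfolding AA_def by (auto intro: subspace_scale)
      qed
      moreover have "G0 \<subseteq> \<Union>C" using False CA unfolding AA_def by blast
      moreover have "\<forall>x a. (x,a)\<in>\<Union>C \<longrightarrow> a \<le> p x" using CA unfolding AA_def by blast
      ultimately have "\<Union>C \<in> AA" unfolding AA_def by blast
      then show ?thesis by blast
    qed
  qed
  then obtain M where MA: "M \<in> AA" and Mmax: "\<And>X. X \<in> AA \<Longrightarrow> M \<subseteq> X \<Longrightarrow> X = M" by blast
  have Msub: "subspace M" and G0M: "G0 \<subseteq> M" and Mdom: "\<And>x a. (x,a) \<in> M \<Longrightarrow> a \<le> p x"
    using MA unfolding AA_def by auto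
  have M0: "(0,0) \<in> M" using subspace_0[OF Msub] by (simp add: zero_prod_def)
  have Mscale: "(t *\<^sub>R x, t * a) \<in> M" if "(x,a) \<in> M" for t x a
    using subspace_scale[OF Msub that, of t] by simp
  have Madd: "(x + y, a + b) \<in> M" if "(x,a) \<in> M" "(y,b) \<in> M" for x y a b
    using subspace_add[OF Msub that] by simp
  have Mdiff: "(x - y, a - b) \<in> M" if "(x,a) \<in> M" "(y,b) \<in> M" for x y a b
    using subspace_diff[OF Msub that] by simp
  have total: "\<exists>a. (x0,a) \<in> M" for x0
  proof (rule ccontr)
    assume nx: "\<not> (\<exists>a. (x0,a) \<in> M)"
    define L where "L = {a - p (h - x0) | h a. (h,a) \<in> M}"
    define c where "c = Sup L"
    have key: "a1 - p (h1 - x0) \<le> p (h2 + x0) - a2" if "(h1,a1) \<in> M" "(h2,a2) \<in> M" for h1 a1 h2 a2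
    proof -
      have "a1 + a2 \<le> p (h1 + h2)" using Mdom[OF Madd[OF that]] .
      also have "\<dots> \<le> p (h1 - x0) + p (h2 + x0)" using sub[of "h1 - x0" "h2 + x0"] by simp
      finally show ?thesis by simp
    qed
    have LI: "l \<le> c" if "l \<in> L" for l
    proof -
      have "bdd_above L" unfolding bdd_above_def L_def using key[OF _ M0] by auto
      then show ?thesis using that cSup_upper unfolding c_def by blast
    qed
    have LS: "c \<le> p (h + x0) - a" if "(h,a) \<in> M" for h a
    proof -
      have "L \<noteq> {}" unfolding L_def using M0 by blast
      then show ?thesis unfolding c_def by (rule cSup_least) (auto simp: L_def intro: key[OF _ that])
    qed
    have i: "a - p (h - x0) \<le> c" if "(h,a) \<in> M" for h a using LI that unfolding L_def by blast
    define M' where "M' = span (insert (x0,c) M)"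
    have spanM: "span M = M" using Msub by (simp add: span_eq_iff)
    have "M' \<in> AA"
    proof -
      have "subspace M'" unfolding M'_def by (rule subspace_span)
      moreover have "G0 \<subseteq> M'" using G0M span_superset unfolding M'_def by blast
      moreover have "b \<le> p y" if yb: "(y,b) \<in> M'" for y b
      proof -
        obtain t where "(y,b) - t *\<^sub>R (x0,c) \<in> span M" using yb unfolding M'_def span_insert by blast
        then have hM: "(y - t *\<^sub>R x0, b - t * c) \<in> M" using spanM by simp
        define h where "h = y - t *\<^sub>R x0"
        define a where "a = b - t * c"
        have hM': "(h,a) \<in> M" using hM h_def a_def by simp
        have ya: "y = h + t *\<^sub>R x0" "b = a + t * c" using h_def a_def by auto
        consider "t = 0" | "t > 0" | "t < 0" by linarith
        then show ?thesis
        proof cases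
          case 1 then show ?thesis using Mdom[OF hM'] ya by simp
        next
          case 2
          have "c \<le> p ((1/t) *\<^sub>R h + x0) - (1/t) * a" using LS[OF Mscale[OF hM', of "1/t"]] .
          then have "t * c \<le> t * p ((1/t) *\<^sub>R h + x0) - a" using 2
            by (simp add: field_simps)
          also have "t * p ((1/t) *\<^sub>R h + x0) = p (t *\<^sub>R ((1/t) *\<^sub>R h + x0))" using hom 2 by simp
          also have "t *\<^sub>R ((1/t) *\<^sub>R h + x0) = h + t *\<^sub>R x0" using 2 by (simp add: algebra_simps)
          finally show ?thesis using ya by simp
        next
          case 3
          define s where "s = -t"
          have s: "s > 0" using 3 s_def by simp
          have "(1/s) * a - p ((1/s) *\<^sub>R h - x0) \<le> c" using i[OF Mscale[OF hM', of "1/s"]] .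
          then have "a - s * p ((1/s) *\<^sub>R h - x0) \<le> s * c" using s
            by (simp add: field_simps)
          also have "s * p ((1/s) *\<^sub>R h - x0) = p (s *\<^sub>R ((1/s) *\<^sub>R h - x0))" using hom s by simp
          also have "s *\<^sub>R ((1/s) *\<^sub>R h - x0) = h + t *\<^sub>R x0" using s s_def by (simp add: algebra_simps)
          finally show ?thesis using ya s_def by simp
        qed
      qed
      ultimately show ?thesis unfolding AA_def by blast
    qed
    moreover have "M \<subseteq> M'" unfolding M'_def using span_superset by blast
    ultimately have "M' = M" using Mmax by blast
    moreover have "(x0,c) \<in> M'" unfolding M'_def using span_superset by blast
    ultimately show False using nx by blast
  qed
  have uniq: "a = b" if "(x,a) \<in> M" "(x,b) \<in> M" for x a b
  proof (rule ccontr)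
    assume ab: "a \<noteq> b"
    have "(0, a - b) \<in> M" using Mdiff[OF that] by simp
    then have "((1/(a-b)) *\<^sub>R 0, (1/(a-b)) * (a - b)) \<in> M" by (rule Mscale)
    then have "(0, 1) \<in> M" using ab by simp
    then show False using Mdom p0 by fastforce
  qed
  define f where "f x = (THE a. (x,a) \<in> M)" for x
  have fM: "(x, f x) \<in> M" for x
    unfolding f_def using total[of x] uniq by (metis theI)
  have "linear f"
  proof (rule linearI)
    fix x y show "f (x + y) = f x + f y" using uniq[OF fM Madd[OF fM fM]] .
  next
    fix c x show "f (c *\<^sub>R x) = c *\<^sub>R f x" using uniq[OF fM Mscale[OF fM]] by simp
  qed
  moreover have "\<forall>x. f x \<le> p x" using fM Mdom by blast
  moreover have "f z = p z"
  proof -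
    have "(z, p z) \<in> M" using G0M span_superset unfolding G0_def by blast
    then show ?thesis using uniq fM by blast
  qed
  ultimately show ?thesis by blast
qed

lemma infdist_lessE:
  assumes "A \<noteq> {}" "infdist x A < e"
  shows "\<exists>a\<in>A. dist x a < e"
proof -
  have "bdd_below ((\<lambda>a. dist x a) ` A)" by (rule bdd_belowI[of _ 0]) auto
  then show ?thesis using assms infdist_notempty[OF assms(1)] cINF_less_iff by metis
qed

lemma infdist_scale_le:
  fixes C :: "'a::metric_space set"
  assumes "C \<noteq> {}" "t > 0" and h: "\<And>c. c \<in> C \<Longrightarrow> \<exists>c'\<in>C. dist x' c' \<le> t * dist x c"
  shows "infdist x' C \<le> t * infdist x C"
proof (rule field_le_epsilon)
  fix e :: real assume e: "e > 0"
  obtain c where c: "c \<in> C" "dist x c < infdist x C + e / t"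
    using infdist_lessE[OF assms(1), of x "infdist x C + e/t"] e assms(2) by auto
  obtain c' where c': "c' \<in> C" "dist x' c' \<le> t * dist x c" using h[OF c(1)] by blast
  have "infdist x' C \<le> dist x' c'" using c'(1) by (rule infdist_le)
  also have "\<dots> \<le> t * dist x c" using c' by simp
  also have "\<dots> \<le> t * (infdist x C + e / t)" using c assms(2) by simp
  also have "\<dots> = t * infdist x C + e" using assms(2) by (simp add: field_simps)
  finally show "infdist x' C \<le> t * infdist x C + e" .
qed

lemma separation:
  fixes K :: "'a::real_normed_vector set"
  assumes cK: "convex K" and Kne: "K \<noteq> {}" and d: "\<delta> > 0" and far: "\<And>k. k \<in> K \<Longrightarrow> \<delta> \<le> dist a k"
  shows "\<exists>(f::'a \<Rightarrow> real) \<eta>. bounded_linear f \<and> \<eta> > 0 \<and> (\<forall>k\<in>K. f k \<le> f a - \<eta>)"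
proof -
  define r where "r = \<delta> / 2"
  have r: "r > 0" using d r_def by simp
  define U where "U = {k - a + y | k y. k \<in> K \<and> norm y < r}"
  define C where "C = {t *\<^sub>R u | t u. t \<ge> 0 \<and> u \<in> U}"
  have memC: "t *\<^sub>R u \<in> C" if "t \<ge> 0" "u \<in> U" for t u using that unfolding C_def by blast
  have memU: "k - a + y \<in> U" if "k \<in> K" "norm y < r" for k y using that unfolding U_def by blast
  obtain k0 where k0: "k0 \<in> K" using Kne by blast
  define u0 where "u0 = k0 - a"
  have u0U: "u0 \<in> U"
  proof -
    have "k0 - a + 0 \<in> U" using k0 r by (intro memU) auto
    then show ?thesis unfolding u0_def by simp
  qed
  have Uconv: "convex U"
    unfolding convex_def
  proof (intro ballI allI impI)
    fix x y and u v :: real assume x: "x \<in> U" and y: "y \<in> U" and uv: "0 \<le> u" "0 \<le> v" "u + v = 1"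
    obtain k1 y1 where 1: "x = k1 - a + y1" "k1 \<in> K" "norm y1 < r" using x U_def by blast
    obtain k2 y2 where 2: "y = k2 - a + y2" "k2 \<in> K" "norm y2 < r" using y U_def by blast
    have "u *\<^sub>R k1 + v *\<^sub>R k2 \<in> K" using cK 1 2 uv unfolding convex_def by blast
    moreover have "norm (u *\<^sub>R y1 + v *\<^sub>R y2) < r"
    proof -
      have "norm (u *\<^sub>R y1 + v *\<^sub>R y2) \<le> u * norm y1 + v * norm y2"
        using norm_triangle_ineq[of "u *\<^sub>R y1" "v *\<^sub>R y2"] uv by simp
      also have "\<dots> < r"
      proof (cases "u = 0")
        case True then show ?thesis using uv 2 by simp
      next
        case False
        then have "u * norm y1 < u * r" using uv 1 by simp
        moreover have "v * norm y2 \<le> v * r" using uv 2 by (simp add: mult_left_mono)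
        moreover have "u * r + v * r = r" using uv by (simp add: distrib_right[symmetric])
        ultimately show ?thesis by linarith
      qed
      finally show ?thesis .
    qed
    moreover have "u *\<^sub>R x + v *\<^sub>R y = (u *\<^sub>R k1 + v *\<^sub>R k2) - a + (u *\<^sub>R y1 + v *\<^sub>R y2)"
    proof -
      have "u *\<^sub>R x + v *\<^sub>R y = (u *\<^sub>R k1 + v *\<^sub>R k2) - (u+v) *\<^sub>R a + (u *\<^sub>R y1 + v *\<^sub>R y2)"
        unfolding 1(1) 2(1) by (simp add: algebra_simps)
      then show ?thesis using uv(3) by simp
    qed
    ultimately show "u *\<^sub>R x + v *\<^sub>R y \<in> U" unfolding U_def by blast
  qed
  have Unorm: "norm u \<ge> r" if hyp: "u \<in> U" for u
  proof -
    obtain k y where ky: "u = k - a + y" "k \<in> K" "norm y < r" using hyp U_def by blast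
    have "\<delta> \<le> norm (k - a)" using far[OF ky(2)] by (simp add: dist_norm norm_minus_commute)
    also have "\<dots> \<le> norm u + norm y" using ky norm_triangle_ineq4[of u y] by simp
    finally show ?thesis using ky r_def by simp
  qed
  have C0: "0 \<in> C"
  proof -
    have "0 *\<^sub>R u0 \<in> C" using u0U by (intro memC) auto
    then show ?thesis by simp
  qed
  have Cne: "C \<noteq> {}" using C0 by blast
  have UC: "U \<subseteq> C"
  proof
    fix u assume "u \<in> U"
    then have "1 *\<^sub>R u \<in> C" by (intro memC) auto
    then show "u \<in> C" by simp
  qed
  have Cadd: "c1 + c2 \<in> C" if hyp: "c1 \<in> C" "c2 \<in> C" for c1 c2
  proof -
    obtain t1 u1 where 1: "c1 = t1 *\<^sub>R u1" "t1 \<ge> 0" "u1 \<in> U" using hyp C_def by blast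
    obtain t2 u2 where 2: "c2 = t2 *\<^sub>R u2" "t2 \<ge> 0" "u2 \<in> U" using hyp C_def by blast
    show ?thesis
    proof (cases "t1 + t2 = 0")
      case True
      then have "t1 = 0" "t2 = 0" using 1 2 by linarith+
      then show ?thesis using 1 2 C0 by simp
    next
      case False
      then have s: "t1 + t2 > 0" using 1 2 by simp
      have "(t1/(t1+t2)) *\<^sub>R u1 + (t2/(t1+t2)) *\<^sub>R u2 \<in> U"
        using Uconv 1 2 s unfolding convex_def by (simp add: add_divide_distrib[symmetric])
      moreover have "c1 + c2 = (t1 + t2) *\<^sub>R ((t1/(t1+t2)) *\<^sub>R u1 + (t2/(t1+t2)) *\<^sub>R u2)"
        using 1 2 s by (simp add: scaleR_add_right)
      moreover have "t1 + t2 \<ge> 0" using s by simp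
      ultimately show ?thesis using memC by metis
    qed
  qed
  have Cscale: "s *\<^sub>R c \<in> C" if hyp: "c \<in> C" "s > 0" for s c
  proof -
    obtain t u where 1: "c = t *\<^sub>R u" "t \<ge> 0" "u \<in> U" using hyp C_def by blast
    then have "s *\<^sub>R c = (s * t) *\<^sub>R u" by simp
    moreover have "s * t \<ge> 0" using 1 hyp by simp
    ultimately show ?thesis using memC 1 by metis
  qed
  define p where "p x = infdist x C" for x
  have psub: "p (x + y) \<le> p x + p y" for x y
    unfolding p_def
  proof (rule field_le_epsilon)
    fix e :: real assume e: "e > 0"
    obtain c1 where c1: "c1 \<in> C" "dist x c1 < infdist x C + e/2"
      using infdist_lessE[OF Cne, of x "infdist x C + e/2"] e by auto
    obtain c2 where c2: "c2 \<in> C" "dist y c2 < infdist y C + e/2"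
      using infdist_lessE[OF Cne, of y "infdist y C + e/2"] e by auto
    have "infdist (x + y) C \<le> dist (x + y) (c1 + c2)" using Cadd[OF c1(1) c2(1)] by (rule infdist_le)
    also have "\<dots> \<le> dist x c1 + dist y c2"
      unfolding dist_norm using norm_triangle_ineq[of "x - c1" "y - c2"] by (simp add: algebra_simps)
    finally show "infdist (x + y) C \<le> infdist x C + infdist y C + e" using c1 c2 by simp
  qed
  have phom: "p (t *\<^sub>R x) = t * p x" if t: "t > 0" for t x
  proof -
    have "p (t *\<^sub>R x) \<le> t * p x" unfolding p_def
    proof (rule infdist_scale_le[OF Cne t])
      fix c assume "c \<in> C"
      then have "t *\<^sub>R c \<in> C" using Cscale t by blast
      moreover have "dist (t *\<^sub>R x) (t *\<^sub>R c) = t * dist x c" using t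
        by (simp add: dist_norm scaleR_diff_right[symmetric])
      ultimately show "\<exists>c'\<in>C. dist (t *\<^sub>R x) c' \<le> t * dist x c" by force
    qed
    moreover have "p x \<le> (1/t) * p (t *\<^sub>R x)" unfolding p_def
    proof (rule infdist_scale_le[OF Cne])
      show "1/t > 0" using t by simp
      fix c assume "c \<in> C"
      then have "(1/t) *\<^sub>R c \<in> C" using Cscale t by simp
      moreover have "dist x ((1/t) *\<^sub>R c) = (1/t) * dist (t *\<^sub>R x) c"
      proof -
        have "x - (1/t) *\<^sub>R c = (1/t) *\<^sub>R (t *\<^sub>R x - c)" using t by (simp add: algebra_simps)
        then show ?thesis using t by (simp add: dist_norm)
      qed
      ultimately show "\<exists>c'\<in>C. dist x c' \<le> (1/t) * dist (t *\<^sub>R x) c" by (metis order_refl)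
    qed
    ultimately show ?thesis using t by (simp add: field_simps)
  qed
  define z where "z = - u0"
  obtain f where f: "linear f" "\<And>x. f x \<le> p x" "f z = p z"
    using hb_ext[of p z, OF psub phom] by blast
  have pnorm: "p x \<le> norm x" for x unfolding p_def using infdist_le[OF C0, of x] by simp
  have p0: "p 0 = 0" unfolding p_def using C0 by simp
  have pz: "p z \<ge> r"
  proof -
    have "r \<le> dist z c" if hyp: "c \<in> C" for c
    proof -
      obtain t u where 1: "c = t *\<^sub>R u" "t \<ge> 0" "u \<in> U" using hyp C_def by blast
      have "(1/(1+t)) *\<^sub>R u0 + (t/(1+t)) *\<^sub>R u \<in> U"
        using Uconv u0U 1 unfolding convex_def by (simp add: add_divide_distrib[symmetric])
      then have "r \<le> norm ((1/(1+t)) *\<^sub>R u0 + (t/(1+t)) *\<^sub>R u)" by (rule Unorm)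
      also have "(1/(1+t)) *\<^sub>R u0 + (t/(1+t)) *\<^sub>R u = (1/(1+t)) *\<^sub>R (u0 + c)"
        using 1 by (simp add: scaleR_add_right)
      also have "norm \<dots> = norm (u0 + c) / (1 + t)" using 1 by simp
      finally have "r * (1 + t) \<le> norm (u0 + c)" using 1 by (simp add: field_simps)
      moreover have "r \<le> r * (1 + t)" using 1 r by simp
      moreover have "dist z c = norm (u0 + c)" unfolding z_def dist_norm
        by (metis minus_diff_eq norm_minus_cancel diff_minus_eq_add add.commute)
      ultimately show ?thesis by linarith
    qed
    then show ?thesis unfolding p_def infdist_notempty[OF Cne] using Cne by (intro cINF_greatest) auto
  qed
  have fadd: "f (x + y) = f x + f y" for x y using f(1) by (rule linear_add)
  have fscale: "f (c *\<^sub>R x) = c * f x" for c x using linear_scale[OF f(1)] by simp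
  have "bounded_linear f"
  proof (rule bounded_linear_intro[where K=1])
    show "f (x + y) = f x + f y" for x y by (rule fadd)
    show "f (c *\<^sub>R x) = c *\<^sub>R f x" for c x using fscale by simp
    fix x
    have "f x \<le> norm x" using f(2) pnorm order_trans by blast
    moreover have "- f x \<le> norm x"
      using f(2)[of "-x"] pnorm[of "-x"] fscale[of "-1" x] by simp
    ultimately show "norm (f x) \<le> norm x * 1" by simp
  qed
  have zne: "z \<noteq> 0" using pz p0 r by auto
  define y0 where "y0 = (r / 2 / norm z) *\<^sub>R z"
  define \<eta> where "\<eta> = r / 2 / norm z * f z"
  have eta: "\<eta> > 0" using zne r pz f(3) unfolding \<eta>_def by simp
  have ny0: "norm y0 < r" using zne r unfolding y0_def by simp
  have "\<forall>k\<in>K. f k \<le> f a - \<eta>"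
  proof
    fix k assume k: "k \<in> K"
    have "k - a + y0 \<in> C" using UC memU[OF k ny0] by blast
    then have "f (k - a + y0) \<le> 0" using f(2)[of "k - a + y0"] unfolding p_def by simp
    moreover have "f (k - a + y0) = f k - f a + \<eta>"
      using fadd fscale[of "-1" a] fadd[of k "-a"] unfolding y0_def \<eta>_def by (simp add: fscale)
    ultimately show "f k \<le> f a - \<eta>" by simp
  qed
  then show ?thesis using \<open>bounded_linear f\<close> eta by (intro exI[of _ f] exI[of _ \<eta>]) simp
qed


lemma bdd_f:
  fixes f :: "'a::real_normed_vector \<Rightarrow> real"
  assumes "bounded A" "bounded_linear f"
  shows "bdd_above (f ` A)"
proof -
  obtain Bd where "\<forall>y\<in>f ` A. \<bar>y\<bar> \<le> Bd" using bounded_real[THEN iffD1, OF bounded_linear_image[OF assms]] by blast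
  then show ?thesis by (intro bdd_aboveI[of _ Bd]) auto
qed

lemma slice_sub: "slice A f e \<subseteq> A" unfolding slice_def by blast

lemma slice_ne:
  assumes "A \<noteq> {}" "bounded A" "bounded_linear f" "e > 0"
  shows "slice A f e \<noteq> {}"
proof -
  have "Sup (f ` A) - e < Sup (f ` A)" using assms by simp
  then obtain y where "y \<in> f ` A" "Sup (f ` A) - e < y"
    using less_cSup_iff[of "f ` A" "Sup (f ` A) - e"] assms(1) bdd_f[OF assms(2,3)] by auto
  then show ?thesis unfolding slice_def by blast
qed

lemma is_slice_ne:
  assumes "is_slice A S" "A \<noteq> {}" "bounded A"
  shows "S \<noteq> {}"
proof -
  obtain f e where "bounded_linear f" "e > 0" "S = slice A f e" using assms(1) unfolding is_slice_def by blast
  then show ?thesis using slice_ne assms(2,3) by simp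
qed

lemma is_slice_sub: "is_slice A S \<Longrightarrow> S \<subseteq> A"
  unfolding is_slice_def using slice_sub by blast

definition ccsset :: "nat \<Rightarrow> (nat \<Rightarrow> real) \<Rightarrow> (nat \<Rightarrow> 'a::real_normed_vector set) \<Rightarrow> 'a set" where
  "ccsset m lam S = {(\<Sum>i<m. lam i *\<^sub>R x i) | x. \<forall>i<m. x i \<in> S i}"

lemma ccs_sub:
  assumes "convex A" "\<forall>i<m. lam i > 0" "(\<Sum>i<m. lam i) = 1" "\<forall>i<m. S i \<subseteq> A"
  shows "ccsset m lam S \<subseteq> A"
proof
  fix q assume "q \<in> ccsset m lam S"
  then obtain x where x: "q = (\<Sum>i<m. lam i *\<^sub>R x i)" "\<forall>i<m. x i \<in> S i" unfolding ccsset_def by blast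
  show "q \<in> A" unfolding x(1) using assms x(2)
    by (intro convex_sum) (auto simp: less_imp_le)
qed

lemma ccs_ne:
  assumes "\<forall>i<m. S i \<noteq> {}"
  shows "ccsset m lam S \<noteq> {}"
proof -
  define x where "x i = (SOME y. y \<in> S i)" for i
  have "\<forall>i<m. x i \<in> S i" using assms unfolding x_def by (auto simp: some_in_eq)
  then show ?thesis unfolding ccsset_def by blast
qed

lemma ccs_hull:
  assumes "\<forall>i<m. lam i > 0" "(\<Sum>i<m. lam i) = 1" "\<forall>i<m. B \<inter> S i \<noteq> {}"
  shows "ccsset m lam S \<inter> convex hull B \<noteq> {}"
proof -
  define x where "x i = (SOME y. y \<in> B \<inter> S i)" for i
  have x: "\<forall>i<m. x i \<in> B \<inter> S i"
  proof (intro allI impI)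
    fix i assume "i < m"
    then have "B \<inter> S i \<noteq> {}" using assms by blast
    then show "x i \<in> B \<inter> S i" unfolding x_def by (subst some_in_eq)
  qed
  then have "(\<Sum>i<m. lam i *\<^sub>R x i) \<in> ccsset m lam S" unfolding ccsset_def by blast
  moreover have "(\<Sum>i<m. lam i *\<^sub>R x i) \<in> convex hull B"
    using assms x by (intro convex_sum) (auto simp: less_imp_le hull_inc)
  ultimately show ?thesis by blast
qed

lemma hull_meets_slice:
  fixes A :: "'a::real_normed_vector set"
  assumes cA: "convex A" and bA: "bounded A" and Ane: "A \<noteq> {}" and scs: "small_comb_slices A"
    and D: "A \<subseteq> closure D"
    and P_def: "\<And>d n t. P d n t \<longleftrightarrow> (fst t \<ge> 1 \<and> (\<forall>i<fst t. fst (snd t) i > 0 \<and> is_slice A (snd (snd t) i)) \<and>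
        (\<Sum>i<fst t. fst (snd t) i) = 1 \<and> ccsset (fst t) (fst (snd t)) (snd (snd t)) \<subseteq> ball d (1 / real (Suc n)))"
    and Bmeet: "\<And>d n i. d \<in> D \<Longrightarrow> P d n (R d n) \<Longrightarrow> i < fst (R d n) \<Longrightarrow> B \<inter> snd (snd (R d n)) i \<noteq> {}"
    and R_def: "\<And>d n. R d n = (SOME t. P d n t)"
    and f: "bounded_linear f" and e: "e > 0"
  shows "convex hull B \<inter> slice A f e \<noteq> {}"
proof -
  obtain Kf where Kf: "Kf > 0" "\<And>x. norm (f x) \<le> norm x * Kf"
    using bounded_linear.pos_bounded[OF f] by blast
  obtain n where n: "inverse (real (Suc n)) < e / (4 * Kf)"
    using reals_Archimedean[of "e / (4 * Kf)"] e Kf by auto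
  define \<rho> where "\<rho> = 1 / (2 * real (Suc n))"
  have rho: "\<rho> > 0" unfolding \<rho>_def by simp
  have "is_slice A (slice A f (e/2))" unfolding is_slice_def using f e by (intro exI[of _ f] exI[of _ "e/2"]) auto
  then obtain C where C: "is_ccs A C" "C \<subseteq> slice A f (e/2)" "diameter C < \<rho>"
    using scs[unfolded small_comb_slices_def, rule_format, OF _ rho] by blast
  have "\<exists>m lam S. m \<ge> 1 \<and> (\<forall>i<m. lam i > 0 \<and> is_slice A (S i)) \<and> (\<Sum>i<m. lam i) = 1 \<and>
     C = ccsset m lam S" using C(1) unfolding is_ccs_def ccsset_def .
  then obtain m lam S where mls: "m \<ge> 1" "\<forall>i<m. lam i > 0 \<and> is_slice A (S i)" "(\<Sum>i<m. lam i) = 1"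
     "C = ccsset m lam S" by blast
  have "\<forall>i<m. S i \<noteq> {}"
  proof (intro allI impI)
    fix i assume "i < m"
    then have "is_slice A (S i)" using mls(2) by simp
    then show "S i \<noteq> {}" by (rule is_slice_ne[OF _ Ane bA])
  qed
  then have "C \<noteq> {}" unfolding mls(4) by (rule ccs_ne)
  then obtain c where c: "c \<in> C" by blast
  have cS: "c \<in> slice A f (e/2)" using subsetD[OF C(2) c] .
  have cA': "c \<in> A" using subsetD[OF slice_sub cS] .
  obtain d where d0: "d \<in> D" "dist c d < \<rho>" using closure_approachableD[OF subsetD[OF D cA'] rho] by blast
  have d: "d \<in> D" "dist d c < \<rho>" using d0 by (simp_all add: dist_commute)
  have "C \<subseteq> A" using C(2) slice_sub by (rule order_trans)
  then have bC: "bounded C" by (rule bounded_subset[OF bA])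
  have "C \<subseteq> ball d (1 / real (Suc n))"
  proof
    fix x assume x: "x \<in> C"
    have "dist c x \<le> diameter C" using bC c x by (rule diameter_bounded_bound)
    then have "dist d x < 2 * \<rho>" using d dist_triangle[of d x c] C(3) by linarith
    moreover have "2 * \<rho> = 1 / real (Suc n)" unfolding \<rho>_def by (simp add: field_simps)
    ultimately have "dist d x < 1 / real (Suc n)" by linarith
    then show "x \<in> ball d (1 / real (Suc n))" by simp
  qed
  then have "P d n (m, lam, S)" unfolding P_def using mls by simp
  then have PR: "P d n (R d n)" unfolding R_def by (rule someI)
  define m' where "m' = fst (R d n)"
  define lam' where "lam' = fst (snd (R d n))"
  define S' where "S' = snd (snd (R d n))"
  have R': "m' \<ge> 1" "\<forall>i<m'. lam' i > 0 \<and> is_slice A (S' i)" "(\<Sum>i<m'. lam' i) = 1"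
     "ccsset m' lam' S' \<subseteq> ball d (1 / real (Suc n))"
    using PR unfolding P_def m'_def lam'_def S'_def by auto
  have "\<forall>i<m'. B \<inter> S' i \<noteq> {}" using Bmeet[OF d(1) PR] unfolding m'_def S'_def by blast
  then obtain q where q: "q \<in> ccsset m' lam' S'" "q \<in> convex hull B"
    using ccs_hull[of m' lam' B S'] R' by blast
  have "\<forall>i<m'. S' i \<subseteq> A" using R'(2) is_slice_sub by blast
  then have qA: "q \<in> A" using ccs_sub[of A m' lam' S'] cA R'(2,3) q(1) by auto
  have "q \<in> ball d (1 / real (Suc n))" using subsetD[OF R'(4) q(1)] .
  then have dq: "dist q d < 1 / real (Suc n)" by (simp add: dist_commute)
  have rr: "\<rho> < 1 / real (Suc n)" unfolding \<rho>_def by (simp add: field_simps)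
  have "dist q c \<le> dist q d + dist d c" by (rule dist_triangle)
  then have dqc: "dist q c < 2 / real (Suc n)" using dq d(2) rr by simp
  have "\<bar>f q - f c\<bar> \<le> norm (q - c) * Kf" using Kf(2)[of "q - c"] linear_diff[OF bounded_linear.linear[OF f]] by simp
  also have "\<dots> \<le> 2 / real (Suc n) * Kf"
    using mult_right_mono[OF less_imp_le[OF dqc[unfolded dist_norm]] less_imp_le[OF Kf(1)]] .
  also have "\<dots> < e / 2"
  proof -
    have "1 / real (Suc n) * (4 * Kf) < e" using n Kf(1) e by (simp add: field_simps)
    then show ?thesis by simp
  qed
  finally have "\<bar>f q - f c\<bar> < e / 2" .
  then have "f q > f c - e / 2" by linarith
  moreover have "f c > Sup (f ` A) - e / 2" using cS unfolding slice_def by simp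
  ultimately have "q \<in> slice A f e" using qA unfolding slice_def by simp
  then show ?thesis using q by blast
qed


theorem theorem2p19:
  fixes A :: "'a::banach set"
  assumes "separable_set A" and "closed A" and "convex A" and "bounded A"
    and "small_comb_slices A"
  shows "SCD_set A"
proof -
  obtain D where D: "countable D" "D \<subseteq> A" "A \<subseteq> closure D"
    using assms(1) unfolding separable_set_def by blast
  show ?thesis
  proof (cases "A = {}")
    case True
    have "is_slice A {}" unfolding is_slice_def slice_def True
      by (intro exI[of _ "\<lambda>x. 0"] exI[of _ "1::real"]) (auto intro: bounded_linear_zero)
    then show ?thesis unfolding SCD_set_def True by (intro exI[of _ "\<lambda>n. {}"]) auto
  next
    case False
    define P where "P d n t \<longleftrightarrow> (fst t \<ge> 1 \<and> (\<forall>i<fst t. fst (snd t) i > 0 \<and> is_slice A (snd (snd t) i)) \<and>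
        (\<Sum>i<fst t. fst (snd t) i) = 1 \<and> ccsset (fst t) (fst (snd t)) (snd (snd t)) \<subseteq> ball d (1 / real (Suc n)))"
      for d :: 'a and n :: nat and t :: "nat \<times> (nat \<Rightarrow> real) \<times> (nat \<Rightarrow> 'a set)"
    define R where "R d n = (SOME t. P d n t)" for d n
    define I where "I = {(d,n). d \<in> D \<and> P d n (R d n)}"
    define \<Sigma> where "\<Sigma> = insert A (\<Union>(d,n)\<in>I. snd (snd (R d n)) ` {..<fst (R d n)})"
    have AS: "is_slice A A"
    proof -
      have "(\<lambda>x::'a. 0::real) ` A = {0}" using False by auto
      then have "slice A (\<lambda>x. 0) 1 = A" unfolding slice_def by auto
      then show ?thesis unfolding is_slice_def
        by (intro exI[of _ "\<lambda>x. 0"] exI[of _ "1::real"]) (auto intro: bounded_linear_zero)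
    qed
    have cI: "countable I"
    proof (rule countable_subset)
      show "I \<subseteq> D \<times> (UNIV :: nat set)" unfolding I_def by auto
      show "countable (D \<times> (UNIV :: nat set))" using D(1) by simp
    qed
    have cfin: "countable (snd (snd (R d n)) ` {..<fst (R d n)})" for d n by (rule countable_finite) simp
    have cS: "countable \<Sigma>" unfolding \<Sigma>_def
      by (intro countable_insert countable_UN[OF cI]) (auto split: prod.split intro: cfin)
    have SS: "is_slice A T" if TS: "T \<in> \<Sigma>" for T
    proof -
      consider "T = A" | d n i where "(d,n) \<in> I" "i < fst (R d n)" "T = snd (snd (R d n)) i"
        using TS unfolding \<Sigma>_def by blast
      then show ?thesis
      proof cases
        case 1 then show ?thesis using AS by simp
      next
        case 2
        then have "P d n (R d n)" unfolding I_def by simp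
        then show ?thesis using 2 unfolding P_def by simp
      qed
    qed
    have Sne: "\<Sigma> \<noteq> {}" unfolding \<Sigma>_def by simp
    define Sn where "Sn = from_nat_into \<Sigma>"
    show ?thesis unfolding SCD_set_def
    proof (intro exI[of _ Sn] conjI allI impI)
      fix n show "is_slice A (Sn n)" unfolding Sn_def using from_nat_into[OF Sne] SS by blast
    next
      fix B assume B: "B \<subseteq> A \<and> (\<forall>n. B \<inter> Sn n \<noteq> {})"
      have meet: "B \<inter> T \<noteq> {}" if "T \<in> \<Sigma>" for T
      proof -
        have "T \<in> range Sn" unfolding Sn_def using range_from_nat_into[OF Sne cS] that by simp
        then show ?thesis using B by auto
      qed
      have Bmeet: "B \<inter> snd (snd (R d n)) i \<noteq> {}" if "d \<in> D" "P d n (R d n)" "i < fst (R d n)" for d n i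
      proof (rule meet)
        have "(d,n) \<in> I" unfolding I_def using that by simp
        then show "snd (snd (R d n)) i \<in> \<Sigma>" unfolding \<Sigma>_def using that(3) by blast
      qed
      have hm: "convex hull B \<inter> slice A f e \<noteq> {}" if "bounded_linear f" "e > 0" for f e
        by (rule hull_meets_slice[OF assms(3) assms(4) False assms(5) D(3) P_def Bmeet R_def that])
      have Bne: "B \<noteq> {}" using meet[of A] unfolding \<Sigma>_def by auto
      show "A \<subseteq> closure (convex hull B)"
      proof
        fix a assume aA: "a \<in> A"
        show "a \<in> closure (convex hull B)"
        proof (rule ccontr)
          assume "a \<notin> closure (convex hull B)"
          then obtain \<delta> where dl: "\<delta> > 0" "\<forall>y\<in>convex hull B. \<not> dist y a < \<delta>"
            unfolding closure_approachable by blast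
          have far: "\<delta> \<le> dist a k" if "k \<in> convex hull B" for k
            using dl(2) that by (auto simp: dist_commute not_less)
          have cne: "convex hull B \<noteq> {}" using Bne by simp
          have "\<exists>(f::'a \<Rightarrow> real) \<eta>. bounded_linear f \<and> \<eta> > 0 \<and> (\<forall>k\<in>convex hull B. f k \<le> f a - \<eta>)"
            by (rule separation[OF convex_convex_hull cne dl(1) far])
          then obtain f :: "'a \<Rightarrow> real" and \<eta> :: real where f: "bounded_linear f" "\<eta> > 0" "\<forall>k\<in>convex hull B. f k \<le> f a - \<eta>"
            by blast
          obtain x where x: "x \<in> convex hull B" "x \<in> slice A f \<eta>" using hm[OF f(1,2)] by blast
          have "f x > Sup (f ` A) - \<eta>" using x(2) unfolding slice_def by simp
          moreover have "f a \<le> Sup (f ` A)" using cSup_upper[OF imageI[OF aA] bdd_f[OF assms(4) f(1)]] .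
          moreover have "f x \<le> f a - \<eta>" using f(3) x(1) by blast
          ultimately show False by linarith
        qed
      qed
    qed
  qed
qed

end
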